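(* Let $\mathcal V$ be a multivector field on $X$, where $X$ is invariant, and let $R\subset X$. The following are equivalent: (1) $R$ is a repeller; (2) $R$ is open, $\mathcal V$-compatible and invariant; (3) $R$ is an open isolated invariant set.
   Context: $X$ is a finite $T_0$ topological space. For $A\subset X$, $\operatorname{cl}A$ is its closure and $\operatorname{mo}A:=\operatorname{cl}A\setminus A$. $A$ is locally closed if it is the intersection of an open and a closed subset of $X$. $H$ denotes relative singular homology. A multivector is a nonempty locally closed subset of $X$; a multivector field $\mathcal V$ on $X$ is a partition of $X$ into multivectors. For $x\in X$, $[x]$ denotes the element of $\mathcal V$ containing $x$. A multivector $V$ is critical if $H(\operatorname{cl}V,\operatorname{mo}V)\neq0$, regular otherwise. $A\subset X$ is $\mathcal V$-compatible if for every $x\in X$ either $[x]\cap A=\emptyset$ or $[x]\subset A$. Put $\Pi_{\mathcal V}(x):=[x]\cup\operatorname{cl}\{x\}$, $\Pi_{\mathcal V}(A):=\bigcup_{x\in A}\Pi_{\mathcal V}(x)$ and $\Pi_{\mathcal V}^{-1}(A):=\{x\in X:\Pi_{\mathcal V}(x)\cap A\neq\emptyset\}$. A $\mathbb Z$-interval is $\mathbb Z\cap I$ for a real interval $I$. A solution in $A\subset X$ is a map $\varphi:D\to A$ on a $\mathbb Z$-interval $D$ with $\varphi(i+1)\in\Pi_{\mathcal V}(\varphi(i))$ whenever $i,i+1\in D$; it is full if $D=\mathbb Z$, and a path if $D$ is bounded, its endpoints being $\varphi(\min D)$ and $\varphi(\max D)$. A full solution $\varphi$ is essential if for every $t\in\mathbb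 Z$ with $[\varphi(t)]$ regular, the set $\{s\in\mathbb Z:\varphi(s)\notin[\varphi(t)]\}$ is unbounded below and unbounded above. $\operatorname{Inv}A$ is the set of $x\in A$ such that there is an essential full solution $\varphi$ with image in $A$ and $\varphi(0)=x$; $A$ is invariant if $\operatorname{Inv}A=A$. A closed set $N$ isolates an invariant set $S\subset N$ if (a) every path in $N$ with both endpoints in $S$ has image contained in $S$, and (b) $\Pi_{\mathcal V}(S)\subset N$. An invariant set is an isolated invariant set if some closed set isolates it. An invariant set $R$ is a repeller if $\Pi_{\mathcal V}^{-1}(R)=R$. *)

theory Defs
  imports "HOL-Analysis.Analysis" "HOL-Homology.Homology"
begin

definition finite_T0_space :: "'a topology \<Rightarrow> bool" where
  "finite_T0_space X \<longleftrightarrow> finite (topspace X) \<and> t0_space X"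

definition locally_closed_in :: "'a topology \<Rightarrow> 'a set \<Rightarrow> bool" where
  "locally_closed_in X A \<longleftrightarrow> (\<exists>U C. openin X U \<and> closedin X C \<and> A = U \<inter> C)"

definition mo :: "'a topology \<Rightarrow> 'a set \<Rightarrow> 'a set" where
  "mo X A = X closure_of A - A"

definition multivector :: "'a topology \<Rightarrow> 'a set \<Rightarrow> bool" where
  "multivector X A \<longleftrightarrow> A \<noteq> {} \<and> locally_closed_in X A"

definition multivector_field :: "'a topology \<Rightarrow> 'a set set \<Rightarrow> bool" where
  "multivector_field X V \<longleftrightarrow>
     (\<forall>A\<in>V. multivector X A) \<and> \<Union>V = topspace X \<and>
     (\<forall>A\<in>V. \<forall>B\<in>V. A \<noteq> B \<longrightarrow> A \<inter> B = {})"

definition cell :: "'a set set \<Rightarrow> 'a \<Rightarrow> 'a set" where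
  "cell V x = (THE A. A \<in> V \<and> x \<in> A)"

text \<open>Critical multivector: H(cl A, mo A) \<noteq> 0 (relative singular homology,
  integer coefficients, some degree p).\<close>
definition critical :: "'a topology \<Rightarrow> 'a set \<Rightarrow> bool" where
  "critical X A \<longleftrightarrow>
     (\<exists>p. \<not> trivial_group (relative_homology_group p (subtopology X (X closure_of A)) (mo X A)))"

definition regular :: "'a topology \<Rightarrow> 'a set \<Rightarrow> bool" where
  "regular X A \<longleftrightarrow> \<not> critical X A"

definition compatible :: "'a topology \<Rightarrow> 'a set set \<Rightarrow> 'a set \<Rightarrow> bool" where
  "compatible X V A \<longleftrightarrow>
     (\<forall>x\<in>topspace X. cell V x \<inter> A = {} \<or> cell V x \<subseteq> A)"

definition Pi_V :: "'a topology \<Rightarrow> 'a set set \<Rightarrow> 'a \<Rightarrow> 'a set" where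
  "Pi_V X V x = cell V x \<union> X closure_of {x}"

definition Pi_V_set :: "'a topology \<Rightarrow> 'a set set \<Rightarrow> 'a set \<Rightarrow> 'a set" where
  "Pi_V_set X V A = (\<Union>x\<in>A. Pi_V X V x)"

definition Pi_V_inv :: "'a topology \<Rightarrow> 'a set set \<Rightarrow> 'a set \<Rightarrow> 'a set" where
  "Pi_V_inv X V A = {x \<in> topspace X. Pi_V X V x \<inter> A \<noteq> {}}"

text \<open>Z-intervals: intersections of Z with a real interval (order-convex sets of integers).\<close>
definition Z_interval :: "int set \<Rightarrow> bool" where
  "Z_interval D \<longleftrightarrow> (\<forall>i\<in>D. \<forall>k\<in>D. \<forall>j. i \<le> j \<and> j \<le> k \<longrightarrow> j \<in> D)"

definition solution :: "'a topology \<Rightarrow> 'a set set \<Rightarrow> 'a set \<Rightarrow> int set \<Rightarrow> (int \<Rightarrow> 'a) \<Rightarrow> bool" where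
  "solution X V A D \<phi> \<longleftrightarrow> Z_interval D \<and> \<phi> ` D \<subseteq> A \<and>
     (\<forall>i. i \<in> D \<and> i + 1 \<in> D \<longrightarrow> \<phi> (i + 1) \<in> Pi_V X V (\<phi> i))"

definition full_solution :: "'a topology \<Rightarrow> 'a set set \<Rightarrow> 'a set \<Rightarrow> (int \<Rightarrow> 'a) \<Rightarrow> bool" where
  "full_solution X V A \<phi> \<longleftrightarrow> solution X V A UNIV \<phi>"

text \<open>A path: solution on a bounded (nonempty, so that it has endpoints) Z-interval.\<close>
definition path_in :: "'a topology \<Rightarrow> 'a set set \<Rightarrow> 'a set \<Rightarrow> int set \<Rightarrow> (int \<Rightarrow> 'a) \<Rightarrow> bool" where
  "path_in X V A D \<phi> \<longleftrightarrow> solution X V A D \<phi> \<and> D \<noteq> {} \<and> bdd_above D \<and> bdd_below D"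

definition unbounded_both :: "int set \<Rightarrow> bool" where
  "unbounded_both S \<longleftrightarrow> (\<forall>n. \<exists>s\<in>S. s < n) \<and> (\<forall>n. \<exists>s\<in>S. n < s)"

definition essential :: "'a topology \<Rightarrow> 'a set set \<Rightarrow> (int \<Rightarrow> 'a) \<Rightarrow> bool" where
  "essential X V \<phi> \<longleftrightarrow>
     (\<forall>t. regular X (cell V (\<phi> t)) \<longrightarrow> unbounded_both {s. \<phi> s \<notin> cell V (\<phi> t)})"

definition Inv :: "'a topology \<Rightarrow> 'a set set \<Rightarrow> 'a set \<Rightarrow> 'a set" where
  "Inv X V A = {x \<in> A. \<exists>\<phi>. full_solution X V A \<phi> \<and> essential X V \<phi> \<and> \<phi> 0 = x}"

definition invariant :: "'a topology \<Rightarrow> 'a set set \<Rightarrow> 'a set \<Rightarrow> bool" where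
  "invariant X V A \<longleftrightarrow> Inv X V A = A"

definition isolates :: "'a topology \<Rightarrow> 'a set set \<Rightarrow> 'a set \<Rightarrow> 'a set \<Rightarrow> bool" where
  "isolates X V N S \<longleftrightarrow> closedin X N \<and> S \<subseteq> N \<and>
     (\<forall>D \<phi>. path_in X V N D \<phi> \<and> \<phi> (Min D) \<in> S \<and> \<phi> (Max D) \<in> S \<longrightarrow> \<phi> ` D \<subseteq> S) \<and>
     Pi_V_set X V S \<subseteq> N"

definition isolated_invariant :: "'a topology \<Rightarrow> 'a set set \<Rightarrow> 'a set \<Rightarrow> bool" where
  "isolated_invariant X V S \<longleftrightarrow> invariant X V S \<and> (\<exists>N. isolates X V N S)"

definition repeller :: "'a topology \<Rightarrow> 'a set set \<Rightarrow> 'a set \<Rightarrow> bool" where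
  "repeller X V R \<longleftrightarrow> invariant X V R \<and> Pi_V_inv X V R = R"

end

theory Submission
  imports Defs
begin

lemma cell_props:
  assumes "multivector_field X V" "x \<in> topspace X"
  shows "cell V x \<in> V \<and> x \<in> cell V x"
proof -
  obtain A where A: "A\<in>V" "x\<in>A" using assms unfolding multivector_field_def by blast
  have "cell V x = A" unfolding cell_def
    apply (rule the_equality) using A assms unfolding multivector_field_def by blast+
  thus ?thesis using A by simp
qed

lemma cell_sub:
  assumes "multivector_field X V" "x \<in> topspace X"
  shows "cell V x \<subseteq> topspace X"
  using cell_props[OF assms] assms(1) unfolding multivector_field_def by blast

lemma cell_eq:
  assumes "multivector_field X V" "x \<in> topspace X" "z \<in> cell V x"
  shows "cell V z = cell V x"
proof -
  have z: "z \<in> topspace X" using cell_sub[OF assms(1,2)] assms(3) by blast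
  show ?thesis using cell_props[OF assms(1) z] cell_props[OF assms(1,2)] assms(1,3)
    unfolding multivector_field_def by blast
qed

lemma open_from_up:
  assumes "finite (topspace X)" "R \<subseteq> topspace X"
    and up: "\<And>x y. x \<in> topspace X \<Longrightarrow> y \<in> R \<Longrightarrow> y \<in> X closure_of {x} \<Longrightarrow> x \<in> R"
  shows "openin X R"
proof -
  have eq: "topspace X - R = (\<Union>x\<in>topspace X - R. X closure_of {x})"
  proof
    show "topspace X - R \<subseteq> (\<Union>x\<in>topspace X - R. X closure_of {x})"
      using closure_of_subset[of "{_}" X] by fastforce
    show "(\<Union>x\<in>topspace X - R. X closure_of {x}) \<subseteq> topspace X - R"
      using up closure_of_subset_topspace by fastforce
  qed
  have "closedin X (topspace X - R)"
    by (subst eq, rule closedin_Union) (use assms(1) in auto)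
  thus ?thesis using assms(2) openin_closedin_eq by blast
qed

lemma open_closure_point:
  assumes "openin X R" "y \<in> R" "y \<in> X closure_of {x}"
  shows "x \<in> R"
  using assms unfolding closure_of_def by blast

lemma path_back:
  assumes "path_in X V N D \<phi>" "N \<subseteq> topspace X" "Pi_V_inv X V R = R"
    "\<phi> (Max D) \<in> R"
  shows "\<phi> ` D \<subseteq> R"
proof -
  have sol: "Z_interval D" "\<phi> ` D \<subseteq> N"
    "\<And>i. i \<in> D \<Longrightarrow> i + 1 \<in> D \<Longrightarrow> \<phi> (i + 1) \<in> Pi_V X V (\<phi> i)"
    using assms(1) unfolding path_in_def solution_def by auto
  have ne: "D \<noteq> {}" and ba: "bdd_above D" and bb: "bdd_below D"
    using assms(1) unfolding path_in_def by auto
  obtain a b where "\<forall>i\<in>D. i \<le> b" "\<forall>i\<in>D. a \<le> i" using ba bb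
    unfolding bdd_above_def bdd_below_def by blast
  hence "D \<subseteq> {a..b}" by auto
  hence fin: "finite D" using finite_subset by blast
  have mx: "Max D \<in> D" "\<And>i. i \<in> D \<Longrightarrow> i \<le> Max D" using fin ne by auto
  have zi: "\<And>a b j. a \<in> D \<Longrightarrow> b \<in> D \<Longrightarrow> a \<le> j \<Longrightarrow> j \<le> b \<Longrightarrow> j \<in> D"
    using sol(1) unfolding Z_interval_def by blast
  have "\<forall>i\<in>D. nat (Max D - i) = k \<longrightarrow> \<phi> i \<in> R" for k
  proof (induction k)
    case 0
    show ?case
    proof (intro ballI impI)
      fix i assume i: "i \<in> D" "nat (Max D - i) = 0"
      hence "i = Max D" using mx(2)[OF i(1)] by simp
      thus "\<phi> i \<in> R" using assms(4) by simp
    qed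
  next
    case (Suc k)
    show ?case
    proof (intro ballI impI)
      fix i assume i: "i \<in> D" "nat (Max D - i) = Suc k"
      have "0 < nat (Max D - i)" using i(2) by simp
      hence le: "i + 1 \<le> Max D" by simp
      have i1: "i + 1 \<in> D" by (rule zi[OF i(1) mx(1)]) (simp_all add: le)
      have "nat (Max D - (i+1)) = k" using i(2) by simp
      hence "\<phi> (i+1) \<in> R" using Suc.IH i1 by blast
      moreover have "\<phi> (i + 1) \<in> Pi_V X V (\<phi> i)" using sol(3) i i1 by blast
      moreover have "\<phi> i \<in> topspace X" using sol(2) i assms(2) by blast
      ultimately have "\<phi> i \<in> Pi_V_inv X V R" unfolding Pi_V_inv_def by blast
      thus "\<phi> i \<in> R" using assms(3) by simp
    qed
  qed
  thus ?thesis by blast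
qed

lemma three_path:
  assumes "z \<in> Pi_V X V y" "y \<in> Pi_V X V z" "y\<in>N" "z\<in>N"
  shows "path_in X V N {0,1,2} (\<lambda>i::int. if i=1 then z else y)"
proof -
  have zi: "Z_interval {0::int,1,2}" unfolding Z_interval_def
  proof (intro ballI allI impI)
    fix i k j :: int assume "i \<in> {0,1,2}" "k \<in> {0,1,2}" "i \<le> j \<and> j \<le> k"
    hence "0 \<le> j" "j \<le> 2" by auto
    thus "j \<in> {0,1,2}" by auto
  qed
  have st: "\<forall>i::int. i \<in> {0,1,2} \<and> i + 1 \<in> {0,1,2} \<longrightarrow>
      (\<lambda>i::int. if i=1 then z else y) (i + 1) \<in> Pi_V X V ((\<lambda>i::int. if i=1 then z else y) i)"
  proof (intro allI impI)
    fix i :: int assume "i \<in> {0,1,2} \<and> i + 1 \<in> {0,1,2}"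
    hence "i = 0 \<or> i = 1" by auto
    thus "(\<lambda>i::int. if i=1 then z else y) (i + 1) \<in> Pi_V X V ((\<lambda>i::int. if i=1 then z else y) i)"
      using assms by auto
  qed
  show ?thesis unfolding path_in_def solution_def using zi st assms(3,4) by auto
qed

lemma MM3: "Min {0::int,1,2} = 0" "Max {0::int,1,2} = 2" by auto

theorem theorem6p3:
  fixes X :: "'a topology" and V :: "'a set set" and R :: "'a set"
  assumes "finite_T0_space X"
    and "multivector_field X V"
    and "invariant X V (topspace X)"
    and "R \<subseteq> topspace X"
  shows "(repeller X V R \<longleftrightarrow> openin X R \<and> compatible X V R \<and> invariant X V R)
       \<and> (openin X R \<and> compatible X V R \<and> invariant X V R
            \<longleftrightarrow> openin X R \<and> isolated_invariant X V R)"
proof -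
  have fin: "finite (topspace X)" using assms(1) unfolding finite_T0_space_def by blast
  note mv = assms(2)
  have self: "x \<in> Pi_V X V x" if "x \<in> topspace X" for x
    using cell_props[OF mv that] unfolding Pi_V_def by blast
  have A: "openin X R \<and> compatible X V R" if rep: "Pi_V_inv X V R = R"
  proof
    show "openin X R"
    proof (rule open_from_up[OF fin assms(4)])
      fix x y assume "x \<in> topspace X" "y \<in> R" "y \<in> X closure_of {x}"
      hence "x \<in> Pi_V_inv X V R" unfolding Pi_V_inv_def Pi_V_def by blast
      thus "x \<in> R" using rep by simp
    qed
    show "compatible X V R" unfolding compatible_def
    proof (intro ballI)
      fix x assume x: "x \<in> topspace X"
      show "cell V x \<inter> R = {} \<or> cell V x \<subseteq> R"
      proof (cases "cell V x \<inter> R = {}")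
        case False
        have "z \<in> R" if z: "z \<in> cell V x" for z
        proof -
          have "cell V z = cell V x" by (rule cell_eq[OF mv x z])
          moreover have "z \<in> topspace X" using cell_sub[OF mv x] z by blast
          ultimately have "z \<in> Pi_V_inv X V R" using False
            unfolding Pi_V_inv_def Pi_V_def by blast
          thus ?thesis using rep by simp
        qed
        thus ?thesis by blast
      qed simp
    qed
  qed
  have B: "Pi_V_inv X V R = R" if op: "openin X R" and co: "compatible X V R"
  proof
    show "R \<subseteq> Pi_V_inv X V R" using self assms(4) unfolding Pi_V_inv_def by blast
    show "Pi_V_inv X V R \<subseteq> R"
    proof
      fix x assume "x \<in> Pi_V_inv X V R"
      hence x: "x \<in> topspace X" "Pi_V X V x \<inter> R \<noteq> {}" unfolding Pi_V_inv_def by auto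
      show "x \<in> R"
      proof (cases "cell V x \<inter> R = {}")
        case True
        then obtain y where "y \<in> X closure_of {x}" "y \<in> R" using x unfolding Pi_V_def by blast
        thus ?thesis using open_closure_point op by metis
      next
        case False
        hence "cell V x \<subseteq> R" using co x unfolding compatible_def by blast
        thus ?thesis using cell_props[OF mv x(1)] by blast
      qed
    qed
  qed
  have C: "\<exists>N. isolates X V N R" if rep: "Pi_V_inv X V R = R"
  proof
    show "isolates X V (topspace X) R" unfolding isolates_def
    proof (intro conjI allI impI)
      show "closedin X (topspace X)" by simp
      show "R \<subseteq> topspace X" by (rule assms(4))
      show "\<phi> ` D \<subseteq> R" if "path_in X V (topspace X) D \<phi> \<and> \<phi> (Min D) \<in> R \<and> \<phi> (Max D) \<in> R"
        for D \<phi> using path_back[of X V "topspace X" D \<phi> R] that rep by blast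
      show "Pi_V_set X V R \<subseteq> topspace X" unfolding Pi_V_set_def Pi_V_def
      proof (intro UN_least Un_least)
        fix x assume "x \<in> R"
        thus "cell V x \<subseteq> topspace X" using cell_sub[OF mv] assms(4) by blast
        show "X closure_of {x} \<subseteq> topspace X" by (rule closure_of_subset_topspace)
      qed
    qed
  qed
  have D: "compatible X V R" if iso: "isolates X V N R" for N
    unfolding compatible_def
  proof (intro ballI)
    fix x assume x: "x \<in> topspace X"
    show "cell V x \<inter> R = {} \<or> cell V x \<subseteq> R"
    proof (cases "cell V x \<inter> R = {}")
      case False
      then obtain y where y: "y \<in> cell V x" "y \<in> R" by blast
      have yt: "y \<in> topspace X" using y assms(4) by blast
      have cy: "cell V y = cell V x" by (rule cell_eq[OF mv x y(1)])
      have "z \<in> R" if z: "z \<in> cell V x" for z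
      proof -
        have zt: "z \<in> topspace X" using cell_sub[OF mv x] z by blast
        have cz: "cell V z = cell V x" by (rule cell_eq[OF mv x z])
        have zP: "z \<in> Pi_V X V y" using z cy unfolding Pi_V_def by blast
        have yP: "y \<in> Pi_V X V z" using y cz unfolding Pi_V_def by blast
        have zN: "z \<in> N" using iso zP y(2) unfolding isolates_def Pi_V_set_def by blast
        have yN: "y \<in> N" using iso y(2) unfolding isolates_def by blast
        have "path_in X V N {0,1,2} (\<lambda>i::int. if i=1 then z else y)"
          by (rule three_path[OF zP yP yN zN])
        hence "(\<lambda>i::int. if i=1 then z else y) ` {0,1,2} \<subseteq> R"
          using iso y(2) MM3 unfolding isolates_def
          apply (elim conjE)
          apply (drule spec[of _ "{0,1,2}"], drule spec[of _ "\<lambda>i::int. if i=1 then z else y"])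
          by simp
        thus ?thesis by auto
      qed
      thus ?thesis by blast
    qed simp
  qed
  show ?thesis
    unfolding repeller_def isolated_invariant_def using A B C D by blast
qed

end
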